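(* Let each directed channel of a fully connected network of $n$ processes be timely independently with the same probability $p<1$. In a direct channel (single-hop) Omega implementation, a leader can exist only if some process has a timely direct channel to every other process. Then the probability of leader existence in any direct channel Omega implementation, i.e. the probability that there exists a process whose $n-1$ outgoing channels are all timely, approaches $0$ exponentially fast as $n\to\infty$.
   Context: A network has $n$ processes and a directed channel from every process to every other process. Each directed channel is timely with probability $p$, independently of all other channels (the channels from $x$ to $y$ and from $y$ to $x$ are distinct and independent). A direct channel (single-hop) implementation of the Omega failure detector is one in which messages are delivered only over direct channels, so a process can be the leader only if it has a timely direct channel to every other process. *)

theory Defs
  imports "HOL-Probability.Probability"
begin

definition channels :: "nat \<Rightarrow> (nat \<times> nat) set" where
  "channels n = {(i, j). i < n \<and> j < n \<and> i \<noteq> j}"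

definition timely_network :: "nat \<Rightarrow> real \<Rightarrow> (nat \<times> nat \<Rightarrow> bool) pmf" where
  "timely_network n p = Pi_pmf (channels n) False (\<lambda>_. bernoulli_pmf p)"

text \<open>Event: some process has all its n-1 outgoing direct channels timely
  (necessary condition for a leader in a direct-channel Omega implementation).\<close>
definition leader_exists :: "nat \<Rightarrow> (nat \<times> nat \<Rightarrow> bool) set" where
  "leader_exists n = {\<omega>. \<exists>i<n. \<forall>j<n. j \<noteq> i \<longrightarrow> \<omega> (i, j)}"

definition leader_prob :: "nat \<Rightarrow> real \<Rightarrow> real" where
  "leader_prob n p = measure_pmf.prob (timely_network n p) (leader_exists n)"

end

theory Submission imports Defs begin

lemma card_out: "i < n \<Longrightarrow> card {x \<in> channels n. fst x = i} = n - 1"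
proof -
  assume i: "i < n"
  have "{x \<in> channels n. fst x = i} = {i} \<times> ({..<n} - {i})"
    using i by (auto simp: channels_def)
  thus ?thesis using i by (simp add: card_cartesian_product)
qed

lemma prob_one:
  assumes "0 \<le> p" "p \<le> 1" "i < n"
  shows "measure_pmf.prob (timely_network n p) {\<omega>. \<forall>j<n. j \<noteq> i \<longrightarrow> \<omega> (i, j)} = p ^ (n - 1)"
proof -
  define B where "B = (\<lambda>x::nat\<times>nat. if fst x = i then {True} else UNIV)"
  have fin: "finite (channels n)"
    by (rule finite_subset[of _ "{..<n} \<times> {..<n}"]) (auto simp: channels_def)
  have eq: "{\<omega>. \<forall>j<n. j \<noteq> i \<longrightarrow> \<omega> (i, j)} = Pi (channels n) B"
    using assms(3) by (auto simp: B_def channels_def Pi_def)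
  have "measure_pmf.prob (timely_network n p) (Pi (channels n) B) =
        (\<Prod>x\<in>channels n. measure_pmf.prob (bernoulli_pmf p) (B x))"
    unfolding timely_network_def by (rule measure_Pi_pmf_Pi[OF fin])
  also have "\<dots> = (\<Prod>x\<in>channels n. if fst x = i then p else 1)"
    by (rule prod.cong) (auto simp: B_def measure_pmf_single assms)
  also have "\<dots> = (\<Prod>x\<in>{x \<in> channels n. fst x = i}. p)"
    using fin by (simp add: prod.If_cases Int_def)
  also have "\<dots> = p ^ (n - 1)" using card_out[OF assms(3)] by simp
  finally show ?thesis using eq by simp
qed

lemma leader_bound:
  assumes "0 \<le> p" "p \<le> 1"
  shows "leader_prob n p \<le> real n * p ^ (n - 1)"
proof -
  have "leader_exists n = (\<Union>i\<in>{..<n}. {\<omega>. \<forall>j<n. j \<noteq> i \<longrightarrow> \<omega> (i, j)})"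
    by (auto simp: leader_exists_def)
  hence "leader_prob n p \<le> (\<Sum>i\<in>{..<n}. measure_pmf.prob (timely_network n p) {\<omega>. \<forall>j<n. j \<noteq> i \<longrightarrow> \<omega> (i, j)})"
    unfolding leader_prob_def
    by (simp add: measure_pmf.finite_measure_subadditive_finite)
  also have "\<dots> = (\<Sum>i\<in>{..<n}. p ^ (n - 1))"
    by (rule sum.cong) (auto simp: prob_one assms)
  finally show ?thesis by simp
qed

lemma n_pow:
  fixes c :: real assumes "0 < c" "c < 1"
  shows "real n * c ^ n \<le> 1 / (1/c - 1)"
proof -
  define d where "d = 1/c - 1"
  have d: "d > 0" using assms by (simp add: d_def field_simps)
  have "1 + real n * d \<le> (1 + d) ^ n" using d by (intro Bernoulli_inequality) simp
  hence "real n * d * c ^ n \<le> (1 + d) ^ n * c ^ n" using assms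
    by (intro mult_right_mono) auto
  also have "(1 + d) ^ n * c ^ n = 1" using assms
    by (simp add: d_def power_mult_distrib[symmetric])
  finally have "real n * c ^ n * d \<le> 1" by (simp add: algebra_simps)
  thus ?thesis using d unfolding d_def[symmetric] by (simp add: field_simps)
qed

theorem theorem1:
  fixes p :: real
  assumes "0 \<le> p" and "p < 1"
  shows "\<exists>C c. 0 < c \<and> c < 1 \<and> (\<forall>n. leader_prob n p \<le> C * c ^ n)"
proof -
  define q where "q = (1 + p) / 2"
  define c where "c = sqrt q"
  have q: "0 < q" "q < 1" "p \<le> q" using assms by (auto simp: q_def)
  have c: "0 < c" "c < 1" "c * c = q" using q by (auto simp: c_def)
  define K where "K = 1 / (1/c - 1)"
  show ?thesis
  proof (intro exI conjI allI)
    show "0 < c" "c < 1" using c by auto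
    fix n
    have "leader_prob n p \<le> real n * p ^ (n - 1)"
      using assms by (intro leader_bound) auto
    also have "\<dots> \<le> real n * q ^ (n - 1)"
      using assms q by (intro mult_left_mono power_mono) auto
    also have "\<dots> \<le> (K / q) * c ^ n"
    proof (cases n)
      case 0
      have "K > 0" using c unfolding K_def by (simp add: field_simps)
      thus ?thesis using 0 q by simp
    next
      case (Suc m)
      have "q ^ (n - 1) = c ^ n * c ^ n / q"
        using c q Suc by (simp add: power_mult_distrib[symmetric] field_simps)
      hence "real n * q ^ (n - 1) = (real n * c ^ n) * c ^ n / q" by simp
      also have "\<dots> \<le> K * c ^ n / q"
        using n_pow[OF c(1,2), of n] c q unfolding K_def
        by (intro divide_right_mono mult_right_mono) auto
      finally show ?thesis by simp
    qed
    finally show "leader_prob n p \<le> (K / q) * c ^ n" .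
  qed
qed

end
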